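(* Let $n\geq 3$. The center of the ramified symmetric monoid $\mathcal{R}(\mathfrak{S}_n)$ is $Z(\mathcal{R}(\mathfrak{S}_n))=\{1,\;e_1e_2\cdots e_{n-1}\}$, i.e. the submonoid generated by the single idempotent $e_1e_2\cdots e_{n-1}$.
   Context: For $n\ge1$ let $\mathfrak{C}_n$ be the partition monoid: its elements are set partitions of $[2n]=\{1,\dots,2n\}$ (points $1,\dots,n$ on top, $n+1,\dots,2n$ on bottom), and the product $I*J$ is obtained by identifying the bottom point $n+i$ of $I$ with the top point $i$ of $J$, joining blocks transitively, and then deleting the identified middle points (formally, with $X=\{x_1,\dots,x_n\}$ disjoint from $[2n]$, $I*J=(I_X\vee J^X)\cap[2n]$, where $I_X$ replaces $n+i$ by $x_i$ in $I$, $J^X$ replaces $i$ by $x_i$ in $J$, and $\vee$ is the join of set partitions). For set partitions, $I\preceq J$ means every block of $J$ is a union of blocks of $I$. The symmetric group $\mathfrak{S}_n$ is the submonoid of $\mathfrak{C}_n$ of partitions whose blocks are of the form $\{i,n+j\}$; $s_i$ denotes the simple transposition and $1$ the identity $\{\{i,n+i\}\}$. For a submonoid $M\subseteq\mathfrak{C}_n$, the ramified monoid $\mathcal{R}(M)$ is the set of pairs $(I,J)$ of set partitions of $[2n]$ with $I\in M$ and $I\preceq J$, with product $(I,J)*(H,K)=(I*H,J*K)$. The group $\mathfrak{S}_n$ embeds via $w\mapsto(w,w)$. For $i\in[n-1]$, $e_i=(1,b_i)$ where $b_i$ is the set partition obtained from $1$ by merging the blocks $\{i,n+i\}$ and $\{i+1,n+i+1\}$.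 Thus $e_1\cdots e_{n-1}=(1,\{[2n]\})$. *)

theory Defs
  imports Main "HOL-Library.Disjoint_Sets"
begin

type_synonym spart = "nat set set"

definition pmon :: "nat \<Rightarrow> spart set" where
  "pmon n = {P. partition_on {1..2*n} P}"

definition blockrel :: "spart \<Rightarrow> (nat \<times> nat) set" where
  "blockrel P = {(a,b). \<exists>B\<in>P. a \<in> B \<and> b \<in> B}"

definition pjoin :: "spart \<Rightarrow> spart \<Rightarrow> spart" where
  "pjoin P Q = (\<Union>P \<union> \<Union>Q) // ((blockrel P \<union> blockrel Q)\<^sup>+)"

definition prestrict :: "nat set \<Rightarrow> spart \<Rightarrow> spart" where
  "prestrict A P = {B \<inter> A | B. B \<in> P \<and> B \<inter> A \<noteq> {}}"

definition cmap :: "(nat \<Rightarrow> nat) \<Rightarrow> spart \<Rightarrow> spart" where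
  "cmap f P = (\<lambda>B. f ` B) ` P"

text \<open>Middle points x_i are encoded as 2n+i.  I_X replaces n+i by x_i;
  J^X replaces i by x_i.\<close>
definition xbot :: "nat \<Rightarrow> nat \<Rightarrow> nat" where
  "xbot n k = (if n < k \<and> k \<le> 2*n then k + n else k)"

definition xtop :: "nat \<Rightarrow> nat \<Rightarrow> nat" where
  "xtop n k = (if 1 \<le> k \<and> k \<le> n then k + 2*n else k)"

definition pmult :: "nat \<Rightarrow> spart \<Rightarrow> spart \<Rightarrow> spart" where
  "pmult n I J = prestrict {1..2*n} (pjoin (cmap (xbot n) I) (cmap (xtop n) J))"

definition refines :: "spart \<Rightarrow> spart \<Rightarrow> bool" where
  "refines I J \<longleftrightarrow> (\<forall>B\<in>J. \<exists>S\<subseteq>I. B = \<Union>S)"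

definition symgrp :: "nat \<Rightarrow> spart set" where
  "symgrp n = {P. partition_on {1..2*n} P \<and>
     (\<forall>B\<in>P. \<exists>i\<in>{1..n}. \<exists>j\<in>{1..n}. B = {i, n+j})}"

definition id_part :: "nat \<Rightarrow> spart" where
  "id_part n = {{i, n+i} | i. i \<in> {1..n}}"

definition ramified :: "nat \<Rightarrow> spart set \<Rightarrow> (spart \<times> spart) set" where
  "ramified n M = {(I,J). I \<in> M \<and> partition_on {1..2*n} J \<and> refines I J}"

definition rmult :: "nat \<Rightarrow> spart \<times> spart \<Rightarrow> spart \<times> spart \<Rightarrow> spart \<times> spart" where
  "rmult n x y = (pmult n (fst x) (fst y), pmult n (snd x) (snd y))"

definition rone :: "nat \<Rightarrow> spart \<times> spart" where
  "rone n = (id_part n, id_part n)"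

definition center :: "nat \<Rightarrow> (spart \<times> spart) set \<Rightarrow> (spart \<times> spart) set" where
  "center n R = {z \<in> R. \<forall>x\<in>R. rmult n z x = rmult n x z}"

definition bpart :: "nat \<Rightarrow> nat \<Rightarrow> spart" where
  "bpart n i = (id_part n - {{i, n+i}, {i+1, n+i+1}}) \<union> {{i, n+i, i+1, n+i+1}}"

definition egen :: "nat \<Rightarrow> nat \<Rightarrow> spart \<times> spart" where
  "egen n i = (id_part n, bpart n i)"

definition eprod :: "nat \<Rightarrow> spart \<times> spart" where
  "eprod n = foldr (\<lambda>i acc. rmult n (egen n i) acc) [1..<n] (rone n)"

end

theory Submission
  imports Defs
begin


lemma blockrel_alt: "blockrel P = {(x, y). \<exists>p \<in> P. x \<in> p \<and> y \<in> p}"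
  unfolding blockrel_def by simp

lemma br_equiv: "partition_on A P \<Longrightarrow> equiv A (blockrel P)"
  unfolding blockrel_alt by (rule equiv_partition_on)

lemma br_quot: "partition_on A P \<Longrightarrow> A // blockrel P = P"
  unfolding blockrel_alt by (rule partition_on_eq_quotient)

lemma quot_br: assumes "equiv A r" shows "blockrel (A // r) = r"
proof -
  have r: "r \<subseteq> A \<times> A" "refl_on A r" "sym r" "trans r" using assms by (auto elim: equivE)
  show ?thesis
  proof safe
    fix a b assume "(a,b) \<in> blockrel (A // r)"
    then obtain B where B: "B \<in> A // r" "a \<in> B" "b \<in> B" unfolding blockrel_def by auto
    then obtain x where "x \<in> A" "B = r``{x}" by (auto elim: quotientE)
    then have "(x,a) \<in> r" "(x,b) \<in> r" using B by auto
    then show "(a,b) \<in> r" using r unfolding sym_def trans_def by blast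
  next
    fix a b assume ab: "(a,b) \<in> r"
    then have "a \<in> A" using r by auto
    then have "r``{a} \<in> A // r" by (rule quotientI)
    moreover have "a \<in> r``{a}" "b \<in> r``{a}" using ab r \<open>a \<in> A\<close> by (auto simp: refl_on_def)
    ultimately show "(a,b) \<in> blockrel (A // r)" unfolding blockrel_def by auto
  qed
qed

lemma part_eq_iff_br:
  assumes "partition_on A P" "partition_on A Q" "blockrel P = blockrel Q"
  shows "P = Q"
  using br_quot[OF assms(1)] br_quot[OF assms(2)] assms(3) by metis


lemma join_equiv:
  "equiv (\<Union>P \<union> \<Union>Q) ((blockrel P \<union> blockrel Q)\<^sup>+)"
proof (rule equivI)
  let ?R = "blockrel P \<union> blockrel Q"
  have "?R \<subseteq> (\<Union>P \<union> \<Union>Q) \<times> (\<Union>P \<union> \<Union>Q)" unfolding blockrel_def by auto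
  then show "?R\<^sup>+ \<subseteq> (\<Union>P \<union> \<Union>Q) \<times> (\<Union>P \<union> \<Union>Q)"
    by (metis trancl_subset_Sigma)
  show "refl_on (\<Union>P \<union> \<Union>Q) (?R\<^sup>+)"
    unfolding refl_on_def
  proof
    fix x assume "x \<in> \<Union>P \<union> \<Union>Q"
    then have "(x,x) \<in> ?R" unfolding blockrel_def by auto
    then show "(x,x) \<in> ?R\<^sup>+" by auto
  qed
  have "sym ?R" unfolding blockrel_def sym_def by auto
  then show "sym (?R\<^sup>+)" by (rule sym_trancl)
  show "trans (?R\<^sup>+)" by (rule trans_trancl)
qed

lemma prestrict_quot:
  assumes "equiv U r" "A \<subseteq> U"
  shows "prestrict A (U // r) = A // (r \<inter> A \<times> A)"
proof -
  have r: "r \<subseteq> U \<times> U" "refl_on U r" "sym r" "trans r" using assms by (auto elim: equivE)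
  show ?thesis
  proof (rule set_eqI, rule iffI)
    fix X assume "X \<in> prestrict A (U // r)"
    then obtain B where B: "X = B \<inter> A" "B \<in> U // r" "B \<inter> A \<noteq> {}" unfolding prestrict_def by auto
    then obtain u where u: "u \<in> U" "B = r``{u}" by (auto elim: quotientE)
    obtain a where a: "a \<in> B" "a \<in> A" using B by auto
    have "(u,a) \<in> r" using a u by auto
    then have "r``{u} = r``{a}" using assms(1) by (simp add: equiv_class_eq_iff)
    then have "X = (r \<inter> A \<times> A)``{a}" using B u a by auto
    then show "X \<in> A // (r \<inter> A \<times> A)" using a by (auto intro: quotientI)
  next
    fix X assume "X \<in> A // (r \<inter> A \<times> A)"
    then obtain a where a: "a \<in> A" "X = (r \<inter> A \<times> A)``{a}" by (auto elim: quotientE)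
    have "a \<in> U" using a assms by auto
    then have "r``{a} \<in> U // r" by (rule quotientI)
    moreover have "X = r``{a} \<inter> A" using a by auto
    moreover have "a \<in> r``{a}" using r \<open>a \<in> U\<close> by (auto simp: refl_on_def)
    ultimately show "X \<in> prestrict A (U // r)" unfolding prestrict_def using a by blast
  qed
qed

definition TR :: "nat \<Rightarrow> spart \<Rightarrow> spart \<Rightarrow> (nat \<times> nat) set" where
  "TR n I J = (blockrel (cmap (xbot n) I) \<union> blockrel (cmap (xtop n) J))\<^sup>+"

definition PR :: "nat \<Rightarrow> spart \<Rightarrow> spart \<Rightarrow> (nat \<times> nat) set" where
  "PR n I J = TR n I J \<inter> {1..2*n} \<times> {1..2*n}"

lemma Union_cmap: "\<Union>(cmap f P) = f ` \<Union>P"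
  unfolding cmap_def by auto

lemma pmult_PR:
  assumes "\<Union>I = {1..2*n}" "\<Union>J = {1..2*n}"
  shows "pmult n I J = {1..2*n} // PR n I J"
proof -
  let ?U = "\<Union>(cmap (xbot n) I) \<union> \<Union>(cmap (xtop n) J)"
  have U: "{1..2*n} \<subseteq> ?U"
  proof
    fix x assume x: "x \<in> {1..2*n}"
    show "x \<in> ?U"
    proof (cases "x \<le> n")
      case True
      then have "x = xbot n x" unfolding xbot_def by auto
      then show ?thesis using x assms by (auto simp: Union_cmap)
    next
      case False
      then have "x = xtop n x" unfolding xtop_def by auto
      then show ?thesis using x assms by (auto simp: Union_cmap)
    qed
  qed
  show ?thesis unfolding pmult_def pjoin_def PR_def TR_def
    by (rule prestrict_quot[OF join_equiv U])
qed


lemma restr_equiv: assumes "equiv U r" "A \<subseteq> U" shows "equiv A (r \<inter> A \<times> A)"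
  using assms unfolding equiv_def refl_on_def sym_def trans_def by blast

lemma PR_equiv:
  assumes "\<Union>I = {1..2*n}" "\<Union>J = {1..2*n}"
  shows "equiv {1..2*n} (PR n I J)"
proof -
  let ?U = "\<Union>(cmap (xbot n) I) \<union> \<Union>(cmap (xtop n) J)"
  have U: "{1..2*n} \<subseteq> ?U"
  proof
    fix x assume x: "x \<in> {1..2*n}"
    show "x \<in> ?U"
    proof (cases "x \<le> n")
      case True
      then have "x = xbot n x" unfolding xbot_def by auto
      then show ?thesis using x assms by (auto simp: Union_cmap)
    next
      case False
      then have "x = xtop n x" unfolding xtop_def by auto
      then show ?thesis using x assms by (auto simp: Union_cmap)
    qed
  qed
  show ?thesis unfolding PR_def TR_def
    by (rule restr_equiv[OF join_equiv U])
qed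

lemma blockrel_cmapI: "B \<in> P \<Longrightarrow> a \<in> B \<Longrightarrow> b \<in> B \<Longrightarrow> (f a, f b) \<in> blockrel (cmap f P)"
  unfolding blockrel_def cmap_def by auto

lemma blockrel_cmapE: "(u, v) \<in> blockrel (cmap f P) \<Longrightarrow> (\<And>a b. (a,b) \<in> blockrel P \<Longrightarrow> u = f a \<Longrightarrow> v = f b \<Longrightarrow> Q) \<Longrightarrow> Q"
  unfolding blockrel_def cmap_def by auto

definition pp :: "nat \<Rightarrow> (nat \<Rightarrow> nat) \<Rightarrow> spart" where
  "pp n \<sigma> = {{i, n + \<sigma> i} | i. i \<in> {1..n}}"

definition hb :: "nat \<Rightarrow> (nat \<Rightarrow> nat) \<Rightarrow> nat \<Rightarrow> nat" where
  "hb n \<sigma> x = (if n < x then n + \<sigma> (x - n) else x)"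

definition ht :: "nat \<Rightarrow> (nat \<Rightarrow> nat) \<Rightarrow> nat \<Rightarrow> nat" where
  "ht n \<sigma> x = (if x \<le> n then \<sigma> x else x)"

definition invol :: "nat \<Rightarrow> (nat \<Rightarrow> nat) \<Rightarrow> bool" where
  "invol n \<sigma> \<longleftrightarrow> (\<forall>i\<in>{1..n}. \<sigma> i \<in> {1..n} \<and> \<sigma> (\<sigma> i) = i)"

lemma part_refl: "partition_on A P \<Longrightarrow> x \<in> A \<Longrightarrow> (x,x) \<in> blockrel P"
  using br_equiv unfolding equiv_def refl_on_def by blast

lemma part_trans: "partition_on A P \<Longrightarrow> (x,y) \<in> blockrel P \<Longrightarrow> (y,z) \<in> blockrel P \<Longrightarrow> (x,z) \<in> blockrel P"
  using br_equiv unfolding equiv_def trans_def by blast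

lemma part_sym: "partition_on A P \<Longrightarrow> (x,y) \<in> blockrel P \<Longrightarrow> (y,x) \<in> blockrel P"
  using br_equiv unfolding equiv_def sym_def by blast

lemma part_in: "partition_on A P \<Longrightarrow> (x,y) \<in> blockrel P \<Longrightarrow> x \<in> A \<and> y \<in> A"
  using br_equiv unfolding equiv_def refl_on_def by blast

lemma chain3: "(a,b) \<in> R\<^sup>* \<Longrightarrow> (b,c) \<in> R \<Longrightarrow> (c,d) \<in> R\<^sup>* \<Longrightarrow> (a,d) \<in> R\<^sup>+"
  by (rule trancl_rtrancl_trancl[OF rtrancl_into_trancl1])

lemma right_perm:
  assumes I: "partition_on {1..2*n} I" and s: "invol n \<sigma>"
  shows "PR n I (pp n \<sigma>) = {(x,y). x \<in> {1..2*n} \<and> y \<in> {1..2*n} \<and> (hb n \<sigma> x, hb n \<sigma> y) \<in> blockrel I}"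
proof -
  let ?R1 = "blockrel (cmap (xbot n) I)"
  let ?R2 = "blockrel (cmap (xtop n) (pp n \<sigma>))"
  let ?R = "?R1 \<union> ?R2"
  define g where "g u = (if u \<le> n then u else if u \<le> 2*n then n + \<sigma> (u - n) else u - n)" for u
  let ?E = "blockrel I"
  have gx: "g (xbot n a) = a" if "a \<in> {1..2*n}" for a
    using that unfolding g_def xbot_def by auto
  have c1: "(g u, g v) \<in> ?E" if "(u,v) \<in> ?R\<^sup>+" for u v
    using that
  proof (induction rule: trancl_induct)
    case (base y)
    then show ?case
    proof
      assume "(u, y) \<in> ?R1"
      then obtain a b where "(a,b) \<in> ?E" "u = xbot n a" "y = xbot n b" by (rule blockrel_cmapE)
      then show ?thesis using gx part_in[OF I] by auto
    next
      assume "(u, y) \<in> ?R2"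
      then obtain a b where ab: "(a,b) \<in> blockrel (pp n \<sigma>)" "u = xtop n a" "y = xtop n b" by (rule blockrel_cmapE)
      then obtain i where i: "i \<in> {1..n}" "a \<in> {i, n + \<sigma> i}" "b \<in> {i, n + \<sigma> i}"
        unfolding blockrel_def pp_def by auto
      have si: "\<sigma> i \<in> {1..n}" "\<sigma> (\<sigma> i) = i" using s i unfolding invol_def by auto
      have "g (xtop n a) = n + i" "g (xtop n b) = n + i"
        using i si unfolding g_def xtop_def by auto
      moreover have "(n+i, n+i) \<in> ?E" using part_refl[OF I] i by auto
      ultimately show ?thesis using ab by simp
    qed
  next
    case (step y z)
    have "(g y, g z) \<in> ?E" using step(2)
    proof
      assume "(y, z) \<in> ?R1"
      then obtain a b where "(a,b) \<in> ?E" "y = xbot n a" "z = xbot n b" by (rule blockrel_cmapE)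
      then show ?thesis using gx part_in[OF I] by auto
    next
      assume "(y, z) \<in> ?R2"
      then obtain a b where ab: "(a,b) \<in> blockrel (pp n \<sigma>)" "y = xtop n a" "z = xtop n b" by (rule blockrel_cmapE)
      then obtain i where i: "i \<in> {1..n}" "a \<in> {i, n + \<sigma> i}" "b \<in> {i, n + \<sigma> i}"
        unfolding blockrel_def pp_def by auto
      have si: "\<sigma> i \<in> {1..n}" "\<sigma> (\<sigma> i) = i" using s i unfolding invol_def by auto
      have "g (xtop n a) = n + i" "g (xtop n b) = n + i"
        using i si unfolding g_def xtop_def by auto
      moreover have "(n+i, n+i) \<in> ?E" using part_refl[OF I] i by auto
      ultimately show ?thesis using ab by simp
    qed
    then show ?case using step(3) part_trans[OF I] by blast
  qed
  have path: "(x, xbot n (g x)) \<in> ?R\<^sup>*" if x: "x \<in> {1..2*n}" for x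
  proof (cases "x \<le> n")
    case True
    then have "xbot n (g x) = x" unfolding g_def xbot_def by auto
    then show ?thesis by simp
  next
    case False
    define j where "j = x - n"
    have j: "j \<in> {1..n}" "x = n + j" using x False unfolding j_def by auto
    have sj: "\<sigma> j \<in> {1..n}" "\<sigma> (\<sigma> j) = j" using s j unfolding invol_def by auto
    have blk: "{\<sigma> j, n + \<sigma> (\<sigma> j)} \<in> pp n \<sigma>" using sj unfolding pp_def by blast
    have "(xtop n (n + \<sigma> (\<sigma> j)), xtop n (\<sigma> j)) \<in> ?R2"
      by (rule blockrel_cmapI[OF blk]) auto
    moreover have "xtop n (n + \<sigma> (\<sigma> j)) = x" using j sj unfolding xtop_def by auto
    moreover have "xtop n (\<sigma> j) = xbot n (g x)" using j sj False unfolding xtop_def xbot_def g_def by auto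
    ultimately show ?thesis by auto
  qed
  have symR: "sym ?R" unfolding blockrel_def sym_def by auto
  have c2: "(x,y) \<in> ?R\<^sup>+" if xy: "x \<in> {1..2*n}" "y \<in> {1..2*n}" "(g x, g y) \<in> ?E" for x y
  proof -
    have gin: "g x \<in> {1..2*n}" "g y \<in> {1..2*n}" using part_in[OF I xy(3)] by auto
    obtain B where B: "B \<in> I" "g x \<in> B" "g y \<in> B" using xy(3) unfolding blockrel_def by auto
    have "(xbot n (g x), xbot n (g y)) \<in> ?R1" by (rule blockrel_cmapI[OF B])
    moreover have "(x, xbot n (g x)) \<in> ?R\<^sup>*" using path xy by auto
    moreover have "(y, xbot n (g y)) \<in> ?R\<^sup>*" using path xy by auto
    then have "(xbot n (g y), y) \<in> ?R\<^sup>*" using symR by (metis rtrancl_converseI sym_conv_converse_eq)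
    ultimately show ?thesis using chain3[of x _ ?R] by blast
  qed
  have gh: "g x = hb n \<sigma> x" if "x \<in> {1..2*n}" for x
    using that unfolding g_def hb_def by auto
  show ?thesis unfolding PR_def TR_def
  proof (intro set_eqI iffI)
    fix p assume p: "p \<in> ?R\<^sup>+ \<inter> {1..2*n} \<times> {1..2*n}"
    obtain x y where xy: "p = (x,y)" by (cases p)
    show "p \<in> {(x,y). x \<in> {1..2*n} \<and> y \<in> {1..2*n} \<and> (hb n \<sigma> x, hb n \<sigma> y) \<in> blockrel I}"
      using c1[of x y] gh[of x] gh[of y] p xy by auto
  next
    fix p assume p: "p \<in> {(x,y). x \<in> {1..2*n} \<and> y \<in> {1..2*n} \<and> (hb n \<sigma> x, hb n \<sigma> y) \<in> blockrel I}"
    obtain x y where xy: "p = (x,y)" by (cases p)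
    show "p \<in> ?R\<^sup>+ \<inter> {1..2*n} \<times> {1..2*n}"
      using c2[of x y] gh[of x] gh[of y] p xy by auto
  qed
qed


lemma left_perm:
  assumes I: "partition_on {1..2*n} I" and s: "invol n \<sigma>"
  shows "PR n (pp n \<sigma>) I = {(x,y). x \<in> {1..2*n} \<and> y \<in> {1..2*n} \<and> (ht n \<sigma> x, ht n \<sigma> y) \<in> blockrel I}"
proof -
  let ?R1 = "blockrel (cmap (xbot n) (pp n \<sigma>))"
  let ?R2 = "blockrel (cmap (xtop n) I)"
  let ?R = "?R1 \<union> ?R2"
  define g where "g u = (if u \<le> n then \<sigma> u else if u \<le> 2*n then u else u - 2*n)" for u
  let ?E = "blockrel I"
  have gx: "g (xtop n a) = a" if "a \<in> {1..2*n}" for a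
    using that unfolding g_def xtop_def by auto
  have c0: "(g u, g v) \<in> ?E" if "(u,v) \<in> ?R" for u v
    using that
  proof
    assume "(u, v) \<in> ?R2"
    then obtain a b where "(a,b) \<in> ?E" "u = xtop n a" "v = xtop n b" by (rule blockrel_cmapE)
    then show ?thesis using gx part_in[OF I] by auto
  next
    assume "(u, v) \<in> ?R1"
    then obtain a b where ab: "(a,b) \<in> blockrel (pp n \<sigma>)" "u = xbot n a" "v = xbot n b" by (rule blockrel_cmapE)
    then obtain i where i: "i \<in> {1..n}" "a \<in> {i, n + \<sigma> i}" "b \<in> {i, n + \<sigma> i}"
      unfolding blockrel_def pp_def by auto
    have si: "\<sigma> i \<in> {1..n}" "\<sigma> (\<sigma> i) = i" using s i unfolding invol_def by auto
    have "g (xbot n a) = \<sigma> i" "g (xbot n b) = \<sigma> i"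
      using i si unfolding g_def xbot_def by auto
    moreover have "(\<sigma> i, \<sigma> i) \<in> ?E" using part_refl[OF I] si by auto
    ultimately show ?thesis using ab by simp
  qed
  have c1: "(g u, g v) \<in> ?E" if "(u,v) \<in> ?R\<^sup>+" for u v
    using that
  proof (induction rule: trancl_induct)
    case (base y)
    then show ?case using c0 by blast
  next
    case (step y z)
    then show ?case using c0[of y z] part_trans[OF I] by blast
  qed
  have path: "(x, xtop n (g x)) \<in> ?R\<^sup>*" if x: "x \<in> {1..2*n}" for x
  proof (cases "x \<le> n")
    case False
    then have "xtop n (g x) = x" using x unfolding g_def xtop_def by auto
    then show ?thesis by simp
  next
    case True
    have j: "x \<in> {1..n}" using x True by auto
    have blk: "{x, n + \<sigma> x} \<in> pp n \<sigma>" using j unfolding pp_def by blast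
    have sj: "\<sigma> x \<in> {1..n}" using s j unfolding invol_def by auto
    have "(xbot n x, xbot n (n + \<sigma> x)) \<in> ?R1"
      by (rule blockrel_cmapI[OF blk]) auto
    moreover have "xbot n x = x" using j unfolding xbot_def by auto
    moreover have "xbot n (n + \<sigma> x) = xtop n (g x)" using j sj unfolding xtop_def xbot_def g_def by auto
    ultimately show ?thesis by auto
  qed
  have symR: "sym ?R" unfolding blockrel_def sym_def by auto
  have c2: "(x,y) \<in> ?R\<^sup>+" if xy: "x \<in> {1..2*n}" "y \<in> {1..2*n}" "(g x, g y) \<in> ?E" for x y
  proof -
    obtain B where B: "B \<in> I" "g x \<in> B" "g y \<in> B" using xy(3) unfolding blockrel_def by auto
    have "(xtop n (g x), xtop n (g y)) \<in> ?R2" by (rule blockrel_cmapI[OF B])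
    moreover have "(x, xtop n (g x)) \<in> ?R\<^sup>*" using path xy by auto
    moreover have "(y, xtop n (g y)) \<in> ?R\<^sup>*" using path xy by auto
    then have "(xtop n (g y), y) \<in> ?R\<^sup>*" using symR by (metis rtrancl_converseI sym_conv_converse_eq)
    ultimately show ?thesis using chain3[of x _ ?R] by blast
  qed
  have gh: "g x = ht n \<sigma> x" if "x \<in> {1..2*n}" for x
    using that unfolding g_def ht_def by auto
  show ?thesis unfolding PR_def TR_def
  proof (intro set_eqI iffI)
    fix p assume p: "p \<in> ?R\<^sup>+ \<inter> {1..2*n} \<times> {1..2*n}"
    obtain x y where xy: "p = (x,y)" by (cases p)
    show "p \<in> {(x,y). x \<in> {1..2*n} \<and> y \<in> {1..2*n} \<and> (ht n \<sigma> x, ht n \<sigma> y) \<in> blockrel I}"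
      using c1[of x y] gh[of x] gh[of y] p xy by auto
  next
    fix p assume p: "p \<in> {(x,y). x \<in> {1..2*n} \<and> y \<in> {1..2*n} \<and> (ht n \<sigma> x, ht n \<sigma> y) \<in> blockrel I}"
    obtain x y where xy: "p = (x,y)" by (cases p)
    show "p \<in> ?R\<^sup>+ \<inter> {1..2*n} \<times> {1..2*n}"
      using c2[of x y] gh[of x] gh[of y] p xy by auto
  qed
qed


lemma full_left:
  assumes n: "n \<ge> 1" and K: "\<forall>j\<in>{1..n}. \<exists>i\<in>{1..n}. (i, n+j) \<in> blockrel K"
  shows "PR n {{1..2*n}} K = {1..2*n} \<times> {1..2*n}"
proof -
  let ?R1 = "blockrel (cmap (xbot n) {{1..2*n}})"
  let ?R2 = "blockrel (cmap (xtop n) K)"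
  let ?R = "?R1 \<union> ?R2"
  have hub: "(x, 1) \<in> ?R\<^sup>*" if x: "x \<in> {1..2*n}" for x
  proof (cases "x \<le> n")
    case True
    have "(xbot n x, xbot n 1) \<in> ?R1" by (rule blockrel_cmapI) (use x n in auto)
    moreover have "xbot n x = x" "xbot n 1 = 1" using True n unfolding xbot_def by auto
    ultimately show ?thesis by auto
  next
    case False
    define j where "j = x - n"
    have j: "j \<in> {1..n}" "x = n + j" using x False unfolding j_def by auto
    obtain i where i: "i \<in> {1..n}" "(i, n+j) \<in> blockrel K" using K j(1) by blast
    then obtain B where B: "B \<in> K" "i \<in> B" "n+j \<in> B" unfolding blockrel_def by auto
    have "(xtop n (n+j), xtop n i) \<in> ?R2" by (rule blockrel_cmapI[OF B(1) B(3) B(2)])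
    moreover have "xtop n (n+j) = x" "xtop n i = xbot n (n+i)" using i j unfolding xtop_def xbot_def by auto
    moreover have "(xbot n (n+i), xbot n 1) \<in> ?R1" by (rule blockrel_cmapI) (use i n in auto)
    moreover have "xbot n 1 = 1" using n unfolding xbot_def by auto
    ultimately have "(x, xbot n (n+i)) \<in> ?R" "(xbot n (n+i), 1) \<in> ?R" by auto
    then show ?thesis by (meson converse_rtrancl_into_rtrancl r_into_rtrancl)
  qed
  have one: "(1,1) \<in> ?R"
  proof -
    have "(xbot n 1, xbot n 1) \<in> ?R1" by (rule blockrel_cmapI) (use n in auto)
    moreover have "xbot n 1 = 1" using n unfolding xbot_def by auto
    ultimately show ?thesis by auto
  qed
  have symR: "sym ?R" unfolding blockrel_def sym_def by auto
  have "(x,y) \<in> ?R\<^sup>+" if "x \<in> {1..2*n}" "y \<in> {1..2*n}" for x y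
  proof -
    have "(y, 1) \<in> ?R\<^sup>*" using hub that by auto
    then have "(1, y) \<in> ?R\<^sup>*" using symR by (metis rtrancl_converseI sym_conv_converse_eq)
    then show ?thesis using chain3[OF hub[OF that(1)] one] by blast
  qed
  then show ?thesis unfolding PR_def TR_def by auto
qed

lemma full_right:
  assumes n: "n \<ge> 1" and K: "\<forall>i\<in>{1..n}. \<exists>j\<in>{1..n}. (i, n+j) \<in> blockrel K"
  shows "PR n K {{1..2*n}} = {1..2*n} \<times> {1..2*n}"
proof -
  let ?R1 = "blockrel (cmap (xbot n) K)"
  let ?R2 = "blockrel (cmap (xtop n) {{1..2*n}})"
  let ?R = "?R1 \<union> ?R2"
  have hub: "(x, 2*n) \<in> ?R\<^sup>*" if x: "x \<in> {1..2*n}" for x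
  proof (cases "x \<le> n")
    case False
    have "(xtop n x, xtop n (2*n)) \<in> ?R2" by (rule blockrel_cmapI) (use x n in auto)
    moreover have "xtop n x = x" "xtop n (2*n) = 2*n" using False n unfolding xtop_def by auto
    ultimately show ?thesis by auto
  next
    case True
    have xi: "x \<in> {1..n}" using x True by auto
    obtain j where j: "j \<in> {1..n}" "(x, n+j) \<in> blockrel K" using K xi by blast
    then obtain B where B: "B \<in> K" "x \<in> B" "n+j \<in> B" unfolding blockrel_def by auto
    have "(xbot n x, xbot n (n+j)) \<in> ?R1" by (rule blockrel_cmapI[OF B])
    moreover have "xbot n x = x" "xbot n (n+j) = xtop n j" using xi j unfolding xtop_def xbot_def by auto
    moreover have "(xtop n j, xtop n (2*n)) \<in> ?R2" by (rule blockrel_cmapI) (use j n in auto)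
    moreover have "xtop n (2*n) = 2*n" using n unfolding xtop_def by auto
    ultimately have "(x, xtop n j) \<in> ?R" "(xtop n j, 2*n) \<in> ?R" by auto
    then show ?thesis by (meson converse_rtrancl_into_rtrancl r_into_rtrancl)
  qed
  have one: "(2*n,2*n) \<in> ?R"
  proof -
    have "(xtop n (2*n), xtop n (2*n)) \<in> ?R2" by (rule blockrel_cmapI) (use n in auto)
    moreover have "xtop n (2*n) = 2*n" using n unfolding xtop_def by auto
    ultimately show ?thesis by auto
  qed
  have symR: "sym ?R" unfolding blockrel_def sym_def by auto
  have "(x,y) \<in> ?R\<^sup>+" if "x \<in> {1..2*n}" "y \<in> {1..2*n}" for x y
  proof -
    have "(y, 2*n) \<in> ?R\<^sup>*" using hub that by auto
    then have "(2*n, y) \<in> ?R\<^sup>*" using symR by (metis rtrancl_converseI sym_conv_converse_eq)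
    then show ?thesis using chain3[OF hub[OF that(1)] one] by blast
  qed
  then show ?thesis unfolding PR_def TR_def by auto
qed

lemma quot_full: "A \<noteq> {} \<Longrightarrow> A // (A \<times> A) = {A}"
  unfolding quotient_def by auto


lemma pp_partition:
  assumes s: "invol n \<sigma>"
  shows "partition_on {1..2*n} (pp n \<sigma>)"
proof (rule partition_onI)
  show "\<Union>(pp n \<sigma>) = {1..2*n}"
  proof
    show "\<Union>(pp n \<sigma>) \<subseteq> {1..2*n}" using s unfolding pp_def invol_def by fastforce
    show "{1..2*n} \<subseteq> \<Union>(pp n \<sigma>)"
    proof
      fix x assume x: "x \<in> {1..2*n}"
      show "x \<in> \<Union>(pp n \<sigma>)"
      proof (cases "x \<le> n")
        case True
        then have "{x, n + \<sigma> x} \<in> pp n \<sigma>" using x unfolding pp_def by auto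
        then show ?thesis by blast
      next
        case False
        define j where "j = x - n"
        have j: "j \<in> {1..n}" "x = n + j" using x False unfolding j_def by auto
        have sj: "\<sigma> j \<in> {1..n}" "\<sigma> (\<sigma> j) = j" using s j unfolding invol_def by auto
        have "{\<sigma> j, n + \<sigma> (\<sigma> j)} \<in> pp n \<sigma>" using sj unfolding pp_def by auto
        then show ?thesis using j sj by auto
      qed
    qed
  qed
  show "{} \<notin> pp n \<sigma>" unfolding pp_def by auto
  fix p q assume p: "p \<in> pp n \<sigma>" and q: "q \<in> pp n \<sigma>" and pq: "p \<noteq> q"
  then obtain i i' where ii: "i \<in> {1..n}" "p = {i, n + \<sigma> i}" "i' \<in> {1..n}" "q = {i', n + \<sigma> i'}"
    unfolding pp_def by auto
  have si: "\<sigma> i \<in> {1..n}" "\<sigma> (\<sigma> i) = i" "\<sigma> i' \<in> {1..n}" "\<sigma> (\<sigma> i') = i'"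
    using s ii unfolding invol_def by auto
  have "i \<noteq> i'" using pq ii by auto
  moreover have "\<sigma> i \<noteq> \<sigma> i'" using si \<open>i \<noteq> i'\<close> by metis
  ultimately show "disjnt p q" using ii si unfolding disjnt_def by auto
qed

lemma invol_id: "invol n (\<lambda>x. x)" unfolding invol_def by auto

lemma pp_id: "pp n (\<lambda>x. x) = id_part n" unfolding pp_def id_part_def by simp

lemma id_partition: "partition_on {1..2*n} (id_part n)"
  using pp_partition[OF invol_id] pp_id by metis

lemma hb_id: "hb n (\<lambda>x. x) = (\<lambda>x. x)" unfolding hb_def by auto
lemma ht_id: "ht n (\<lambda>x. x) = (\<lambda>x. x)" unfolding ht_def by auto

lemma pmult_id_left:
  assumes "partition_on {1..2*n} P" shows "pmult n (id_part n) P = P"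
proof -
  have "PR n (id_part n) P = blockrel P"
    using left_perm[OF assms invol_id] part_in[OF assms] unfolding pp_id ht_id by auto
  moreover have "pmult n (id_part n) P = {1..2*n} // PR n (id_part n) P"
    by (rule pmult_PR) (use id_partition assms in \<open>auto dest: partition_onD1\<close>)
  ultimately show ?thesis using br_quot[OF assms] by simp
qed

lemma pmult_id_right:
  assumes "partition_on {1..2*n} P" shows "pmult n P (id_part n) = P"
proof -
  have "PR n P (id_part n) = blockrel P"
    using right_perm[OF assms invol_id] part_in[OF assms] unfolding pp_id hb_id by auto
  moreover have "pmult n P (id_part n) = {1..2*n} // PR n P (id_part n)"
    by (rule pmult_PR) (use id_partition assms in \<open>auto dest: partition_onD1\<close>)
  ultimately show ?thesis using br_quot[OF assms] by simp
qed

definition idx :: "nat \<Rightarrow> nat \<Rightarrow> nat" where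
  "idx n x = (if x \<le> n then x else x - n)"

definition relk :: "nat \<Rightarrow> nat \<Rightarrow> (nat \<times> nat) set" where
  "relk n k = {(a,b). a \<in> {1..2*n} \<and> b \<in> {1..2*n} \<and> (idx n a = idx n b \<or> (k \<le> idx n a \<and> k \<le> idx n b))}"

definition F :: "nat \<Rightarrow> nat \<Rightarrow> spart" where
  "F n k = {1..2*n} // relk n k"

lemma relk_equiv: "equiv {1..2*n} (relk n k)"
  unfolding equiv_def refl_on_def sym_def trans_def relk_def by auto

lemma br_F: "blockrel (F n k) = relk n k"
  unfolding F_def by (rule quot_br[OF relk_equiv])

lemma F_partition: "partition_on {1..2*n} (F n k)"
  unfolding F_def by (rule partition_on_quotient[OF relk_equiv])

lemma br_id: "blockrel (id_part n) = {(a,b). a \<in> {1..2*n} \<and> b \<in> {1..2*n} \<and> idx n a = idx n b}"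
proof safe
  fix a b assume "(a,b) \<in> blockrel (id_part n)"
  then obtain i where "i \<in> {1..n}" "a \<in> {i, n+i}" "b \<in> {i, n+i}" unfolding blockrel_def id_part_def by auto
  then show "a \<in> {1..2*n}" "b \<in> {1..2*n}" "idx n a = idx n b" unfolding idx_def by auto
next
  fix a b assume ab: "a \<in> {1..2*n}" "b \<in> {1..2*n}" "idx n a = idx n b"
  define i where "i = idx n a"
  have "i \<in> {1..n}" "a \<in> {i, n+i}" "b \<in> {i, n+i}" using ab unfolding i_def idx_def by (auto split: if_splits)
  then show "(a,b) \<in> blockrel (id_part n)" unfolding blockrel_def id_part_def by blast
qed

lemma F_n: "F n n = id_part n"
proof (rule part_eq_iff_br[OF F_partition id_partition])
  show "blockrel (F n n) = blockrel (id_part n)"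
    unfolding br_F br_id relk_def idx_def by (auto split: if_splits)
qed

lemma F_1: "n \<ge> 1 \<Longrightarrow> F n 1 = {{1..2*n}}"
proof -
  assume n: "n \<ge> 1"
  have "relk n 1 = {1..2*n} \<times> {1..2*n}" unfolding relk_def idx_def by auto
  then show ?thesis unfolding F_def using quot_full[of "{1..2*n}"] n by auto
qed




lemma blockrelI: "B \<in> P \<Longrightarrow> a \<in> B \<Longrightarrow> b \<in> B \<Longrightarrow> (a,b) \<in> blockrel P"
  unfolding blockrel_def by auto

lemma bp1:
  assumes "(a,b) \<in> blockrel (bpart n k)" "1 \<le> k" "k < n"
  shows "a \<in> {1..2*n} \<and> b \<in> {1..2*n} \<and> (idx n a = idx n b \<or> (idx n a \<in> {k, k+1} \<and> idx n b \<in> {k, k+1}))"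
proof -
  obtain B where B: "B \<in> bpart n k" "a \<in> B" "b \<in> B" using assms(1) unfolding blockrel_def by auto
  show ?thesis
  proof (cases "B = {k, n+k, k+1, n+k+1}")
    case True
    then show ?thesis using B assms unfolding idx_def by auto
  next
    case False
    then have "B \<in> id_part n" using B(1) unfolding bpart_def by auto
    then obtain i where "i \<in> {1..n}" "B = {i, n+i}" unfolding id_part_def by auto
    then show ?thesis using B unfolding idx_def by auto
  qed
qed

lemma bp2:
  assumes "i \<in> {1..n}" "1 \<le> k" "k < n"
  shows "(i, n+i) \<in> blockrel (bpart n k)"
proof (cases "i = k \<or> i = k+1")
  case True
  have "{k, n+k, k+1, n+k+1} \<in> bpart n k" unfolding bpart_def by auto
  then show ?thesis by (rule blockrelI) (use True in auto)
next
  case False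
  have "{i, n+i} \<in> id_part n" using assms unfolding id_part_def by auto
  moreover have "{i, n+i} \<noteq> {k, n+k}" "{i, n+i} \<noteq> {k+1, n+k+1}" using False assms
    by (auto simp: doubleton_eq_iff)
  ultimately have "{i, n+i} \<in> bpart n k" unfolding bpart_def by auto
  then show ?thesis unfolding blockrel_def by auto
qed

lemma bp3: "(k, k+1) \<in> blockrel (bpart n k)"
proof -
  have "{k, n+k, k+1, n+k+1} \<in> bpart n k" unfolding bpart_def by auto
  then show ?thesis by (rule blockrelI) auto
qed

lemma bpU: assumes "1 \<le> k" "k < n" shows "\<Union>(bpart n k) = {1..2*n}"
proof
  show "\<Union>(bpart n k) \<subseteq> {1..2*n}"
  proof
    fix x assume "x \<in> \<Union>(bpart n k)"
    then have "(x,x) \<in> blockrel (bpart n k)" unfolding blockrel_def by auto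
    then show "x \<in> {1..2*n}" using bp1 assms by blast
  qed
  show "{1..2*n} \<subseteq> \<Union>(bpart n k)"
  proof
    fix x assume x: "x \<in> {1..2*n}"
    then have "idx n x \<in> {1..n}" "x \<in> {idx n x, n + idx n x}" unfolding idx_def by auto
    then have "(x, x) \<in> blockrel (bpart n k)" using bp2[of "idx n x" n k] assms
      unfolding blockrel_def by auto
    then show "x \<in> \<Union>(bpart n k)" unfolding blockrel_def by auto
  qed
qed

lemma rtr_sym: "sym R \<Longrightarrow> (x,y) \<in> R\<^sup>* \<Longrightarrow> (y,x) \<in> R\<^sup>*"
  by (metis rtrancl_converseI sym_conv_converse_eq)

lemma bstep:
  assumes k: "1 \<le> k" "k < n"
  shows "PR n (bpart n k) (F n (k+1)) = relk n k"
proof -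
  let ?R1 = "blockrel (cmap (xbot n) (bpart n k))"
  let ?R2 = "blockrel (cmap (xtop n) (F n (k+1)))"
  let ?R = "?R1 \<union> ?R2"
  define g where "g u = (if u \<le> n then u else if u \<le> 2*n then u - n else u - 2*n)" for u
  define E where "E = {(i,j). i \<in> {1..n} \<and> j \<in> {1..n} \<and> (i = j \<or> (k \<le> i \<and> k \<le> j))}"
  have Etr: "(i,l) \<in> E" if "(i,j) \<in> E" "(j,l) \<in> E" for i j l using that unfolding E_def by auto
  have gb: "g (xbot n a) = idx n a" if "a \<in> {1..2*n}" for a
    using that unfolding g_def xbot_def idx_def by auto
  have gt: "g (xtop n a) = idx n a" if "a \<in> {1..2*n}" for a
    using that unfolding g_def xtop_def idx_def by auto
  have c0: "(g u, g v) \<in> E" if "(u,v) \<in> ?R" for u v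
    using that
  proof
    assume "(u, v) \<in> ?R1"
    then obtain a b where ab: "(a,b) \<in> blockrel (bpart n k)" "u = xbot n a" "v = xbot n b" by (rule blockrel_cmapE)
    have "a \<in> {1..2*n}" "b \<in> {1..2*n}" using bp1[OF ab(1) k] by auto
    then have "idx n a \<in> {1..n}" "idx n b \<in> {1..n}" unfolding idx_def by auto
    then show ?thesis using bp1[OF ab(1) k] gb ab k unfolding E_def by auto
  next
    assume "(u, v) \<in> ?R2"
    then obtain a b where ab: "(a,b) \<in> relk n (k+1)" "u = xtop n a" "v = xtop n b"
      unfolding br_F[symmetric] by (rule blockrel_cmapE)
    have "a \<in> {1..2*n}" "b \<in> {1..2*n}" using ab unfolding relk_def by auto
    then have "idx n a \<in> {1..n}" "idx n b \<in> {1..n}" unfolding idx_def by auto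
    then show ?thesis using ab gt unfolding E_def relk_def by auto
  qed
  have c1: "(g u, g v) \<in> E" if "(u,v) \<in> ?R\<^sup>+" for u v
    using that
  proof (induction rule: trancl_induct)
    case (base y)
    then show ?case using c0 by blast
  next
    case (step y z)
    then show ?case using c0[of y z] Etr by blast
  qed
  have symR: "sym ?R" unfolding blockrel_def sym_def by auto
  have brF: "(a,b) \<in> blockrel (F n (k+1))" if "(a,b) \<in> relk n (k+1)" for a b
    using that br_F by auto
  have fib: "(n+i, i) \<in> ?R\<^sup>*" if i: "i \<in> {1..n}" for i
  proof -
    have "(i, n+i) \<in> relk n (k+1)" using i unfolding relk_def idx_def by auto
    then obtain B where B: "B \<in> F n (k+1)" "i \<in> B" "n+i \<in> B" using brF unfolding blockrel_def by blast
    have "(xtop n (n+i), xtop n i) \<in> ?R2" by (rule blockrel_cmapI[OF B(1) B(3) B(2)])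
    moreover have "xtop n (n+i) = n+i" "xtop n i = 2*n+i" using i unfolding xtop_def by auto
    moreover obtain C where C: "C \<in> bpart n k" "i \<in> C" "n+i \<in> C" using bp2[OF i k] unfolding blockrel_def by blast
    have "(xbot n (n+i), xbot n i) \<in> ?R1" by (rule blockrel_cmapI[OF C(1) C(3) C(2)])
    moreover have "xbot n (n+i) = 2*n+i" "xbot n i = i" using i unfolding xbot_def by auto
    ultimately have "(n+i, 2*n+i) \<in> ?R" "(2*n+i, i) \<in> ?R" by auto
    then show ?thesis by (meson converse_rtrancl_into_rtrancl r_into_rtrancl)
  qed
  have fibx: "(x, idx n x) \<in> ?R\<^sup>*" if x: "x \<in> {1..2*n}" for x
  proof (cases "x \<le> n")
    case True then show ?thesis unfolding idx_def by auto
  next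
    case False
    then have e: "x = n + idx n x" and ii: "idx n x \<in> {1..n}" using x unfolding idx_def by auto
    have "(n + idx n x, idx n x) \<in> ?R\<^sup>*" by (rule fib[OF ii])
    then show ?thesis using e by simp
  qed
  have bots: "(n+i, n+j) \<in> ?R" if ij: "i \<in> {1..n}" "j \<in> {1..n}" "k+1 \<le> i" "k+1 \<le> j" for i j
  proof -
    have "(n+i, n+j) \<in> relk n (k+1)" using ij unfolding relk_def idx_def by auto
    then obtain B where B: "B \<in> F n (k+1)" "n+i \<in> B" "n+j \<in> B" using brF unfolding blockrel_def by blast
    have "(xtop n (n+i), xtop n (n+j)) \<in> ?R2" by (rule blockrel_cmapI[OF B])
    moreover have "xtop n (n+i) = n+i" "xtop n (n+j) = n+j" using ij unfolding xtop_def by auto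
    ultimately show ?thesis by auto
  qed
  have tops1: "(i, j) \<in> ?R\<^sup>*" if ij: "i \<in> {1..n}" "j \<in> {1..n}" "k+1 \<le> i" "k+1 \<le> j" for i j
  proof -
    have "(n+i, i) \<in> ?R\<^sup>*" by (rule fib[OF ij(1)])
    then have 1: "(i, n+i) \<in> ?R\<^sup>*" by (rule rtr_sym[OF symR])
    have 2: "(n+i, n+j) \<in> ?R\<^sup>*" by (rule r_into_rtrancl[OF bots[OF ij]])
    have 3: "(n+j, j) \<in> ?R\<^sup>*" by (rule fib[OF ij(2)])
    show ?thesis by (rule rtrancl_trans[OF rtrancl_trans[OF 1 2] 3])
  qed
  have kk: "(k, k+1) \<in> ?R"
  proof -
    obtain C where C: "C \<in> bpart n k" "k \<in> C" "k+1 \<in> C" using bp3 unfolding blockrel_def by blast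
    have "(xbot n k, xbot n (k+1)) \<in> ?R1" by (rule blockrel_cmapI[OF C])
    moreover have "xbot n k = k" "xbot n (k+1) = k+1" using k unfolding xbot_def by auto
    ultimately show ?thesis by auto
  qed
  have tops2: "(k, j) \<in> ?R\<^sup>*" if "j \<in> {1..n}" "k+1 \<le> j" for j
  proof -
    have "(k+1, j) \<in> ?R\<^sup>*" using tops1[of "k+1" j] that k by auto
    then show ?thesis by (rule converse_rtrancl_into_rtrancl[OF kk])
  qed
  have tops: "(i, j) \<in> ?R\<^sup>*" if "(i,j) \<in> E" for i j
  proof -
    have ij: "i \<in> {1..n}" "j \<in> {1..n}" "i = j \<or> (k \<le> i \<and> k \<le> j)" using that unfolding E_def by auto
    show ?thesis
    proof (cases "i = j")
      case True then show ?thesis by auto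
    next
      case False
      then have ge: "k \<le> i" "k \<le> j" using ij by auto
      show ?thesis
      proof (cases "i = k")
        case True
        then show ?thesis using tops2[of j] ij False ge by auto
      next
        case ik: False
        show ?thesis
        proof (cases "j = k")
          case True
          then have "(j, i) \<in> ?R\<^sup>*" using tops2[of i] ij ik ge by auto
          then show ?thesis by (rule rtr_sym[OF symR])
        next
          case False
          then show ?thesis using tops1[of i j] ij ik ge by auto
        qed
      qed
    qed
  qed
  have refl: "(x,x) \<in> ?R" if x: "x \<in> {1..2*n}" for x
  proof -
    have ii: "idx n x \<in> {1..n}" and xin: "x \<in> {idx n x, n + idx n x}" using x unfolding idx_def by auto
    obtain C0 where C0: "C0 \<in> bpart n k" "idx n x \<in> C0" "n + idx n x \<in> C0"
      using bp2[OF ii k] unfolding blockrel_def by blast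
    have C: "C0 \<in> bpart n k" "x \<in> C0" using C0 xin by auto
    have "(xbot n x, xbot n x) \<in> ?R1" by (rule blockrel_cmapI[OF C(1) C(2) C(2)])
    show ?thesis
    proof (cases "x \<le> n")
      case True
      then have "xbot n x = x" unfolding xbot_def by auto
      then show ?thesis using \<open>(xbot n x, xbot n x) \<in> ?R1\<close> by auto
    next
      case False
      have "(x,x) \<in> relk n (k+1)" using x unfolding relk_def by auto
      then obtain B where B: "B \<in> F n (k+1)" "x \<in> B" using brF unfolding blockrel_def by blast
      have "(xtop n x, xtop n x) \<in> ?R2" by (rule blockrel_cmapI[OF B B(2)])
      moreover have "xtop n x = x" using False unfolding xtop_def by auto
      ultimately show ?thesis by auto
    qed
  qed
  have c2: "(x,y) \<in> ?R\<^sup>+" if xy: "x \<in> {1..2*n}" "y \<in> {1..2*n}" "(idx n x, idx n y) \<in> E" for x y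
  proof -
    have 1: "(x, idx n x) \<in> ?R\<^sup>*" by (rule fibx[OF xy(1)])
    have 2: "(idx n x, idx n y) \<in> ?R\<^sup>*" by (rule tops[OF xy(3)])
    have 3: "(idx n y, y) \<in> ?R\<^sup>*" by (rule rtr_sym[OF symR fibx[OF xy(2)]])
    have "(x,y) \<in> ?R\<^sup>*" by (rule rtrancl_trans[OF rtrancl_trans[OF 1 2] 3])
    then show ?thesis by (rule rtrancl_into_trancl2[OF refl[OF xy(1)]])
  qed
  have gi: "g x = idx n x" if "x \<in> {1..2*n}" for x
    using that unfolding g_def idx_def by auto
  have Eiff: "(idx n x, idx n y) \<in> E \<longleftrightarrow> (x,y) \<in> relk n k" if "x \<in> {1..2*n}" "y \<in> {1..2*n}" for x y
    using that unfolding E_def relk_def idx_def by auto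
  show ?thesis unfolding PR_def TR_def
  proof (intro set_eqI iffI)
    fix p assume p: "p \<in> ?R\<^sup>+ \<inter> {1..2*n} \<times> {1..2*n}"
    obtain x y where xy: "p = (x,y)" by (cases p)
    show "p \<in> relk n k"
      using c1[of x y] gi[of x] gi[of y] Eiff[of x y] p xy by auto
  next
    fix p assume p: "p \<in> relk n k"
    obtain x y where xy: "p = (x,y)" by (cases p)
    have "x \<in> {1..2*n}" "y \<in> {1..2*n}" using p xy unfolding relk_def by auto
    then show "p \<in> ?R\<^sup>+ \<inter> {1..2*n} \<times> {1..2*n}"
      using c2[of x y] Eiff[of x y] p xy by auto
  qed
qed


lemma eprod_aux:
  "1 \<le> k \<Longrightarrow> k \<le> n \<Longrightarrow> foldr (\<lambda>i acc. rmult n (egen n i) acc) [k..<n] (rone n) = (id_part n, F n k)"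
proof (induction "n - k" arbitrary: k)
  case 0
  then have "k = n" by auto
  then show ?case using F_n by (simp add: rone_def)
next
  case (Suc m)
  then have kn: "k < n" by auto
  have IH: "foldr (\<lambda>i acc. rmult n (egen n i) acc) [k+1..<n] (rone n) = (id_part n, F n (k+1))"
    using Suc kn by auto
  have ups: "[k..<n] = k # [k+1..<n]" using kn by (simp add: upt_conv_Cons)
  have "pmult n (bpart n k) (F n (k+1)) = {1..2*n} // PR n (bpart n k) (F n (k+1))"
    by (rule pmult_PR[OF bpU[OF Suc(3) kn] partition_onD1[OF F_partition, symmetric]])
  also have "\<dots> = {1..2*n} // relk n k" using bstep[OF Suc(3) kn] by simp
  also have "\<dots> = F n k" unfolding F_def ..
  finally have 1: "pmult n (bpart n k) (F n (k+1)) = F n k" .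
  have 2: "pmult n (id_part n) (id_part n) = id_part n" by (rule pmult_id_left[OF id_partition])
  have "foldr (\<lambda>i acc. rmult n (egen n i) acc) [k..<n] (rone n)
      = rmult n (egen n k) (foldr (\<lambda>i acc. rmult n (egen n i) acc) [k+1..<n] (rone n))"
    unfolding ups by simp
  also have "\<dots> = rmult n (egen n k) (id_part n, F n (k+1))" unfolding IH ..
  also have "\<dots> = (id_part n, F n k)" using 1 2 by (simp add: rmult_def egen_def)
  finally show ?case .
qed

lemma eprod_val: "n \<ge> 1 \<Longrightarrow> eprod n = (id_part n, {{1..2*n}})"
  unfolding eprod_def using eprod_aux[of 1 n] F_1 by simp



definition sw :: "nat \<Rightarrow> nat \<Rightarrow> nat \<Rightarrow> nat" where
  "sw a b x = (if x = a then b else if x = b then a else x)"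

definition tau :: "nat \<Rightarrow> nat \<Rightarrow> nat \<Rightarrow> nat \<Rightarrow> nat" where
  "tau n a b x = ht n (sw a b) (hb n (sw a b) x)"

lemma invol_sw: "a \<in> {1..n} \<Longrightarrow> b \<in> {1..n} \<Longrightarrow> invol n (sw a b)"
  unfolding invol_def sw_def by auto

lemma tau_top: "i \<in> {1..n} \<Longrightarrow> tau n a b i = sw a b i"
  unfolding tau_def ht_def hb_def by auto

lemma tau_bot: "j \<in> {1..n} \<Longrightarrow> a \<in> {1..n} \<Longrightarrow> b \<in> {1..n} \<Longrightarrow> tau n a b (n+j) = n + sw a b j"
  unfolding tau_def ht_def hb_def sw_def by auto

lemma pp_symgrp: assumes "invol n \<sigma>" shows "pp n \<sigma> \<in> symgrp n"
proof -
  have "\<forall>B\<in>pp n \<sigma>. \<exists>i\<in>{1..n}. \<exists>j\<in>{1..n}. B = {i, n+j}"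
  proof
    fix B assume "B \<in> pp n \<sigma>"
    then obtain i where i: "i \<in> {1..n}" "B = {i, n + \<sigma> i}" unfolding pp_def by auto
    then have "\<sigma> i \<in> {1..n}" using assms unfolding invol_def by auto
    then show "\<exists>i\<in>{1..n}. \<exists>j\<in>{1..n}. B = {i, n+j}" using i by blast
  qed
  then show ?thesis using pp_partition[OF assms] unfolding symgrp_def by auto
qed

lemma refines_self: "refines P P"
  unfolding refines_def by (metis Sup_insert ccpo_Sup_singleton empty_subsetI insert_subset)

lemma pp_ram: assumes "invol n \<sigma>" shows "(pp n \<sigma>, pp n \<sigma>) \<in> ramified n (symgrp n)"
  using pp_symgrp[OF assms] pp_partition[OF assms] refines_self unfolding ramified_def by auto

lemma symgrp_part: "I \<in> symgrp n \<Longrightarrow> partition_on {1..2*n} I"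
  unfolding symgrp_def by auto

lemma hb_props: assumes "invol n \<sigma>" "x \<in> {1..2*n}"
  shows "hb n \<sigma> x \<in> {1..2*n}" "hb n \<sigma> (hb n \<sigma> x) = x"
proof -
  show "hb n \<sigma> x \<in> {1..2*n}"
  proof (cases "n < x")
    case True
    then have "x - n \<in> {1..n}" using assms by auto
    then have "\<sigma> (x - n) \<in> {1..n}" "\<sigma> (\<sigma> (x - n)) = x - n" using assms(1) unfolding invol_def by auto
    then show ?thesis using assms True unfolding hb_def by auto
  qed (use assms in \<open>auto simp: hb_def\<close>)
  show "hb n \<sigma> (hb n \<sigma> x) = x"
  proof (cases "n < x")
    case True
    then have "x - n \<in> {1..n}" using assms by auto
    then have "\<sigma> (x - n) \<in> {1..n}" "\<sigma> (\<sigma> (x - n)) = x - n" using assms(1) unfolding invol_def by auto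
    then show ?thesis using assms True unfolding hb_def by auto
  qed (use assms in \<open>auto simp: hb_def\<close>)
qed

lemma comm_inv:
  assumes P: "partition_on {1..2*n} P" and s: "invol n \<sigma>"
    and c: "pmult n P (pp n \<sigma>) = pmult n (pp n \<sigma>) P" and xy: "(x,y) \<in> blockrel P"
  shows "(ht n \<sigma> (hb n \<sigma> x), ht n \<sigma> (hb n \<sigma> y)) \<in> blockrel P"
proof -
  have UP: "\<Union>P = {1..2*n}" using partition_onD1[OF P] by simp
  have Upp: "\<Union>(pp n \<sigma>) = {1..2*n}" using partition_onD1[OF pp_partition[OF s]] by simp
  have "PR n P (pp n \<sigma>) = blockrel (pmult n P (pp n \<sigma>))"
    unfolding pmult_PR[OF UP Upp] by (rule quot_br[OF PR_equiv[OF UP Upp], symmetric])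
  also have "\<dots> = blockrel (pmult n (pp n \<sigma>) P)" using c by simp
  also have "\<dots> = PR n (pp n \<sigma>) P"
    unfolding pmult_PR[OF Upp UP] by (rule quot_br[OF PR_equiv[OF Upp UP]])
  finally have eq: "PR n P (pp n \<sigma>) = PR n (pp n \<sigma>) P" .
  have xy2: "x \<in> {1..2*n}" "y \<in> {1..2*n}" using part_in[OF P xy] by auto
  have "(hb n \<sigma> x, hb n \<sigma> y) \<in> PR n P (pp n \<sigma>)"
    unfolding right_perm[OF P s] using hb_props[OF s] xy2 xy by auto
  then have "(hb n \<sigma> x, hb n \<sigma> y) \<in> PR n (pp n \<sigma>) P" using eq by simp
  then show ?thesis unfolding left_perm[OF P s] by auto
qed

lemma sub_part_eq:
  assumes P: "partition_on A P" and Q: "partition_on A Q" and sub: "P \<subseteq> Q"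
  shows "P = Q"
proof
  show "Q \<subseteq> P"
  proof
    fix C assume C: "C \<in> Q"
    then obtain x where x: "x \<in> C" using partition_onD3[OF Q] by (metis all_not_in_conv)
    then have "x \<in> A" using C partition_onD1[OF Q] by auto
    then obtain B where B: "B \<in> P" "x \<in> B" using partition_onD1[OF P] by auto
    have "B \<in> Q" using B sub by auto
    then have "B = C" using partition_onD2[OF Q] C B x unfolding disjoint_def disjnt_def by auto
    then show "C \<in> P" using B by simp
  qed
qed (rule sub)

lemma three: fixes a j n :: nat assumes "n \<ge> 3" "a \<in> {1..n}" "j \<in> {1..n}" obtains c where "c \<in> {1..n}" "c \<noteq> a" "c \<noteq> j"
proof -
  have "\<exists>c\<in>{1,2,3::nat}. c \<noteq> a \<and> c \<noteq> j" by auto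
  then obtain c where c: "c \<in> {1,2,3::nat}" "c \<noteq> a" "c \<noteq> j" by blast
  have "c \<in> {1..n}" using c assms by auto
  then show ?thesis using that c by blast
qed

lemma I_id:
  assumes n: "n \<ge> 3" and I: "I \<in> symgrp n"
    and inv: "\<And>a b x y. a \<in> {1..n} \<Longrightarrow> b \<in> {1..n} \<Longrightarrow> (x,y) \<in> blockrel I \<Longrightarrow> (tau n a b x, tau n a b y) \<in> blockrel I"
  shows "I = id_part n"
proof -
  have P: "partition_on {1..2*n} I" using symgrp_part[OF I] .
  have form: "\<And>B. B \<in> I \<Longrightarrow> \<exists>i\<in>{1..n}. \<exists>j\<in>{1..n}. B = {i, n+j}" using I unfolding symgrp_def by auto
  let ?E = "blockrel I"
  have s1: "\<exists>j\<in>{1..n}. (i, n+j) \<in> ?E" if i: "i \<in> {1..n}" for i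
  proof -
    have "i \<in> \<Union>I" using partition_onD1[OF P] i by auto
    then obtain B where B: "B \<in> I" "i \<in> B" by auto
    obtain i' j' where ij: "i' \<in> {1..n}" "j' \<in> {1..n}" "B = {i', n+j'}" using form[OF B(1)] by auto
    have "i = i'" using B ij i by auto
    then have "(i, n+j') \<in> ?E" using B ij by (auto intro: blockrelI)
    then show ?thesis using ij by auto
  qed
  have s2: "j = j'" if "j \<in> {1..n}" "j' \<in> {1..n}" "(i, n+j) \<in> ?E" "(i, n+j') \<in> ?E" for i j j'
  proof -
    have "(n+j, n+j') \<in> ?E" using that part_sym[OF P] part_trans[OF P] by blast
    then obtain B where B: "B \<in> I" "n+j \<in> B" "n+j' \<in> B" unfolding blockrel_def by auto
    obtain i0 j0 where ij: "i0 \<in> {1..n}" "j0 \<in> {1..n}" "B = {i0, n+j0}" using form[OF B(1)] by auto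
    show ?thesis using B ij that by auto
  qed
  have s3: "(a, n+a) \<in> ?E" if a: "a \<in> {1..n}" for a
  proof -
    obtain j where j: "j \<in> {1..n}" "(a, n+j) \<in> ?E" using s1[OF a] by auto
    show ?thesis
    proof (cases "j = a")
      case True then show ?thesis using j by simp
    next
      case False
      obtain c where c: "c \<in> {1..n}" "c \<noteq> a" "c \<noteq> j" using three[OF n a j(1)] by blast
      have "(tau n j c a, tau n j c (n+j)) \<in> ?E" by (rule inv[OF j(1) c(1) j(2)])
      moreover have "tau n j c a = a" using tau_top[OF a] c False unfolding sw_def by auto
      moreover have "tau n j c (n+j) = n + c" using tau_bot[OF j(1) j(1) c(1)] unfolding sw_def by auto
      ultimately have "(a, n+c) \<in> ?E" by simp
      then have "c = j" using s2[OF c(1) j(1) _ j(2)] by simp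
      then show ?thesis using c by simp
    qed
  qed
  have "I \<subseteq> id_part n"
  proof
    fix B assume B: "B \<in> I"
    obtain i j where ij: "i \<in> {1..n}" "j \<in> {1..n}" "B = {i, n+j}" using form[OF B] by auto
    have "(i, n+j) \<in> ?E" using B ij by (auto intro: blockrelI)
    then have "j = i" using s2[OF ij(2) ij(1) _ s3[OF ij(1)]] by simp
    then show "B \<in> id_part n" using ij unfolding id_part_def by auto
  qed
  then show ?thesis by (rule sub_part_eq[OF P id_partition])
qed


lemma J_cases:
  assumes n: "n \<ge> 3" and P: "partition_on {1..2*n} J" and r: "refines (id_part n) J"
    and inv: "\<And>a b x y. a \<in> {1..n} \<Longrightarrow> b \<in> {1..n} \<Longrightarrow> (x,y) \<in> blockrel J \<Longrightarrow> (tau n a b x, tau n a b y) \<in> blockrel J"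
  shows "J = id_part n \<or> J = {{1..2*n}}"
proof -
  let ?E = "blockrel J"
  have r1: "(i, n+i) \<in> ?E" if i: "i \<in> {1..n}" for i
  proof -
    have "i \<in> \<Union>J" using partition_onD1[OF P] i by auto
    then obtain B where B: "B \<in> J" "i \<in> B" by auto
    then obtain S where S: "S \<subseteq> id_part n" "B = \<Union>S" using r unfolding refines_def by auto
    then obtain C where C: "C \<in> S" "i \<in> C" using B by auto
    then obtain i' where i': "i' \<in> {1..n}" "C = {i', n+i'}" using S unfolding id_part_def by auto
    have "i = i'" using C i' i by auto
    then have "n+i \<in> B" using C i' S by auto
    then show ?thesis using B by (auto intro: blockrelI)
  qed
  have r2: "(x, idx n x) \<in> ?E" if x: "x \<in> {1..2*n}" for x
  proof (cases "x \<le> n")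
    case True
    then show ?thesis using part_refl[OF P x] unfolding idx_def by simp
  next
    case False
    then have e: "x = n + idx n x" and ii: "idx n x \<in> {1..n}" using x unfolding idx_def by auto
    have "(idx n x, n + idx n x) \<in> ?E" by (rule r1[OF ii])
    then show ?thesis using e part_sym[OF P] by metis
  qed
  show ?thesis
  proof (cases "\<exists>i j. i \<in> {1..n} \<and> j \<in> {1..n} \<and> i \<noteq> j \<and> (i,j) \<in> ?E")
    case True
    then obtain i j where ij: "i \<in> {1..n}" "j \<in> {1..n}" "i \<noteq> j" "(i,j) \<in> ?E" by blast
    have allk: "(i,k) \<in> ?E" if k: "k \<in> {1..n}" for k
    proof -
      consider "k = i" | "k = j" | "k \<noteq> i" "k \<noteq> j" by blast
      then show ?thesis
      proof cases
        case 1 then show ?thesis using part_refl[OF P] ij by auto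
      next
        case 2 then show ?thesis using ij by simp
      next
        case 3
        have "(tau n j k i, tau n j k j) \<in> ?E" by (rule inv[OF ij(2) k ij(4)])
        moreover have "tau n j k i = i" using tau_top[OF ij(1)] 3 ij unfolding sw_def by auto
        moreover have "tau n j k j = k" using tau_top[OF ij(2)] unfolding sw_def by auto
        ultimately show ?thesis by simp
      qed
    qed
    have ix: "(i, x) \<in> ?E" if x: "x \<in> {1..2*n}" for x
    proof -
      have "idx n x \<in> {1..n}" using x unfolding idx_def by auto
      then have "(i, idx n x) \<in> ?E" by (rule allk)
      moreover have "(idx n x, x) \<in> ?E" using r2[OF x] part_sym[OF P] by blast
      ultimately show ?thesis using part_trans[OF P] by blast
    qed
    have "?E = {1..2*n} \<times> {1..2*n}"
    proof (intro set_eqI iffI)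
      fix p assume "p \<in> ?E" then show "p \<in> {1..2*n} \<times> {1..2*n}" using part_in[OF P] by (cases p) auto
    next
      fix p assume p: "p \<in> {1..2*n} \<times> {1..2*n}"
      obtain x y where xy: "p = (x,y)" by (cases p)
      have "(x, i) \<in> ?E" using ix[of x] p xy part_sym[OF P] by auto
      moreover have "(i, y) \<in> ?E" using ix[of y] p xy by auto
      ultimately show "p \<in> ?E" using xy part_trans[OF P] by blast
    qed
    then have "J = {1..2*n} // ({1..2*n} \<times> {1..2*n})" using br_quot[OF P] by simp
    then show ?thesis using quot_full[of "{1..2*n}"] n by auto
  next
    case False
    have "?E = blockrel (id_part n)"
      unfolding br_id
    proof (intro set_eqI iffI)
      fix p assume p: "p \<in> ?E"
      obtain a b where ab: "p = (a,b)" by (cases p)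
      have ab2: "a \<in> {1..2*n}" "b \<in> {1..2*n}" using part_in[OF P] p ab by auto
      have "(idx n a, a) \<in> ?E" using r2[OF ab2(1)] part_sym[OF P] by blast
      moreover have "(b, idx n b) \<in> ?E" using r2[OF ab2(2)] by blast
      ultimately have "(idx n a, idx n b) \<in> ?E" using p ab part_trans[OF P] by blast
      moreover have "idx n a \<in> {1..n}" "idx n b \<in> {1..n}" using ab2 unfolding idx_def by auto
      ultimately have "idx n a = idx n b" using False by blast
      then show "p \<in> {(a,b). a \<in> {1..2*n} \<and> b \<in> {1..2*n} \<and> idx n a = idx n b}" using ab ab2 by auto
    next
      fix p assume p: "p \<in> {(a,b). a \<in> {1..2*n} \<and> b \<in> {1..2*n} \<and> idx n a = idx n b}"
      obtain a b where ab: "p = (a,b)" by (cases p)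
      have ab2: "a \<in> {1..2*n}" "b \<in> {1..2*n}" "idx n a = idx n b" using p ab by auto
      have "(a, idx n a) \<in> ?E" using r2[OF ab2(1)] by blast
      moreover have "(idx n b, b) \<in> ?E" using r2[OF ab2(2)] part_sym[OF P] by blast
      ultimately show "p \<in> ?E" using ab ab2(3) part_trans[OF P] by metis
    qed
    then have "J = id_part n" by (rule part_eq_iff_br[OF P id_partition])
    then show ?thesis by simp
  qed
qed

lemma partners:
  assumes I: "I \<in> symgrp n" and K: "partition_on {1..2*n} K" and r: "refines I K"
  shows "\<forall>j\<in>{1..n}. \<exists>i\<in>{1..n}. (i, n+j) \<in> blockrel K"
    and "\<forall>i\<in>{1..n}. \<exists>j\<in>{1..n}. (i, n+j) \<in> blockrel K"
proof -
  have form: "\<And>B. B \<in> I \<Longrightarrow> \<exists>i\<in>{1..n}. \<exists>j\<in>{1..n}. B = {i, n+j}" using I unfolding symgrp_def by auto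
  have main: "\<exists>i\<in>{1..n}. \<exists>j\<in>{1..n}. x \<in> {i, n+j} \<and> (i, n+j) \<in> blockrel K" if x: "x \<in> {1..2*n}" for x
  proof -
    have "x \<in> \<Union>K" using partition_onD1[OF K] x by auto
    then obtain B where B: "B \<in> K" "x \<in> B" by auto
    then obtain S where S: "S \<subseteq> I" "B = \<Union>S" using r unfolding refines_def by auto
    then obtain C where C: "C \<in> S" "x \<in> C" using B by auto
    then obtain i j where ij: "i \<in> {1..n}" "j \<in> {1..n}" "C = {i, n+j}" using S form by blast
    have "C \<subseteq> B" using C S by auto
    then have "(i, n+j) \<in> blockrel K" using B ij by (auto intro: blockrelI)
    then show ?thesis using ij C by blast
  qed
  show "\<forall>j\<in>{1..n}. \<exists>i\<in>{1..n}. (i, n+j) \<in> blockrel K"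
  proof
    fix j assume j: "j \<in> {1..n}"
    then have "n + j \<in> {1..2*n}" by auto
    then obtain i j' where "i \<in> {1..n}" "j' \<in> {1..n}" "n + j \<in> {i, n+j'}" "(i, n+j') \<in> blockrel K"
      using main by blast
    then show "\<exists>i\<in>{1..n}. (i, n+j) \<in> blockrel K" using j by auto
  qed
  show "\<forall>i\<in>{1..n}. \<exists>j\<in>{1..n}. (i, n+j) \<in> blockrel K"
  proof
    fix i assume i: "i \<in> {1..n}"
    then have "i \<in> {1..2*n}" by auto
    then obtain i' j where "i' \<in> {1..n}" "j \<in> {1..n}" "i \<in> {i', n+j}" "(i', n+j) \<in> blockrel K"
      using main by blast
    then show "\<exists>j\<in>{1..n}. (i, n+j) \<in> blockrel K" using i by auto
  qed
qed


lemma ram_parts: "(I,K) \<in> ramified n (symgrp n) \<Longrightarrow> I \<in> symgrp n \<and> partition_on {1..2*n} I \<and> partition_on {1..2*n} K \<and> refines I K"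
  unfolding ramified_def using symgrp_part by auto

lemma full_mult:
  assumes n: "n \<ge> 1" and x: "(I,K) \<in> ramified n (symgrp n)"
  shows "rmult n (id_part n, {{1..2*n}}) (I,K) = (I, {{1..2*n}})"
    and "rmult n (I,K) (id_part n, {{1..2*n}}) = (I, {{1..2*n}})"
proof -
  have p: "I \<in> symgrp n" "partition_on {1..2*n} I" "partition_on {1..2*n} K" "refines I K"
    using ram_parts[OF x] by auto
  have UK: "\<Union>K = {1..2*n}" using partition_onD1[OF p(3)] by simp
  have Uf: "\<Union>{{1..2*n}} = {1..2*n}" by simp
  have ne: "{1..2*n} \<noteq> {}" using n by auto
  have "pmult n {{1..2*n}} K = {1..2*n} // PR n {{1..2*n}} K" by (rule pmult_PR[OF Uf UK])
  also have "\<dots> = {{1..2*n}}" unfolding full_left[OF n partners(1)[OF p(1) p(3) p(4)]] by (rule quot_full[OF ne])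
  finally have 1: "pmult n {{1..2*n}} K = {{1..2*n}}" .
  have "pmult n K {{1..2*n}} = {1..2*n} // PR n K {{1..2*n}}" by (rule pmult_PR[OF UK Uf])
  also have "\<dots> = {{1..2*n}}" unfolding full_right[OF n partners(2)[OF p(1) p(3) p(4)]] by (rule quot_full[OF ne])
  finally have 2: "pmult n K {{1..2*n}} = {{1..2*n}}" .
  show "rmult n (id_part n, {{1..2*n}}) (I,K) = (I, {{1..2*n}})"
    using 1 pmult_id_left[OF p(2)] by (simp add: rmult_def)
  show "rmult n (I,K) (id_part n, {{1..2*n}}) = (I, {{1..2*n}})"
    using 2 pmult_id_right[OF p(2)] by (simp add: rmult_def)
qed

lemma id_sym: "id_part n \<in> symgrp n"
  unfolding pp_id[symmetric] by (rule pp_symgrp[OF invol_id])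

theorem proposition3p4:
  fixes n :: nat
  assumes "n \<ge> 3"
  shows "center n (ramified n (symgrp n)) = {rone n, eprod n}"
proof -
  have n1: "n \<ge> 1" using assms by simp
  have ep: "eprod n = (id_part n, {{1..2*n}})" by (rule eprod_val[OF n1])
  have rone_ram: "rone n \<in> ramified n (symgrp n)"
    unfolding rone_def pp_id[symmetric] by (rule pp_ram[OF invol_id])
  have full_part: "partition_on {1..2*n} {{1..2*n}}" by (rule partition_on_space) (use n1 in auto)
  have ref: "refines (id_part n) {{1..2*n}}"
    unfolding refines_def using partition_onD1[OF id_partition] by auto
  have full_ram: "(id_part n, {{1..2*n}}) \<in> ramified n (symgrp n)"
    unfolding ramified_def using id_sym full_part ref by auto
  have rone_c: "rone n \<in> center n (ramified n (symgrp n))"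
    unfolding center_def
  proof (intro CollectI conjI ballI rone_ram)
    fix x assume x: "x \<in> ramified n (symgrp n)"
    obtain I K where IK: "x = (I,K)" by (cases x)
    have p: "partition_on {1..2*n} I" "partition_on {1..2*n} K" using ram_parts x IK by auto
    show "rmult n (rone n) x = rmult n x (rone n)"
      unfolding IK rone_def rmult_def using pmult_id_left[OF p(1)] pmult_id_left[OF p(2)]
        pmult_id_right[OF p(1)] pmult_id_right[OF p(2)] by simp
  qed
  have full_c: "(id_part n, {{1..2*n}}) \<in> center n (ramified n (symgrp n))"
    unfolding center_def
  proof (intro CollectI conjI ballI full_ram)
    fix x assume x: "x \<in> ramified n (symgrp n)"
    obtain I K where IK: "x = (I,K)" by (cases x)
    show "rmult n (id_part n, {{1..2*n}}) x = rmult n x (id_part n, {{1..2*n}})"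
      using full_mult[OF n1] x IK by simp
  qed
  have sub: "z = rone n \<or> z = eprod n" if z: "z \<in> center n (ramified n (symgrp n))" for z
  proof -
    obtain I J where IJ: "z = (I,J)" by (cases z)
    have zr: "(I,J) \<in> ramified n (symgrp n)" and comm: "\<And>x. x \<in> ramified n (symgrp n) \<Longrightarrow> rmult n (I,J) x = rmult n x (I,J)"
      using z IJ unfolding center_def by auto
    have p: "I \<in> symgrp n" "partition_on {1..2*n} I" "partition_on {1..2*n} J" "refines I J"
      using ram_parts[OF zr] by auto
    have cc: "pmult n I (pp n (sw a b)) = pmult n (pp n (sw a b)) I \<and> pmult n J (pp n (sw a b)) = pmult n (pp n (sw a b)) J"
      if ab: "a \<in> {1..n}" "b \<in> {1..n}" for a b
    proof -
      have "rmult n (I,J) (pp n (sw a b), pp n (sw a b)) = rmult n (pp n (sw a b), pp n (sw a b)) (I,J)"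
        by (rule comm[OF pp_ram[OF invol_sw[OF ab]]])
      then show ?thesis by (simp add: rmult_def)
    qed
    have invI: "(tau n a b x, tau n a b y) \<in> blockrel I"
      if "a \<in> {1..n}" "b \<in> {1..n}" "(x,y) \<in> blockrel I" for a b x y
      unfolding tau_def by (rule comm_inv[OF p(2) invol_sw[OF that(1,2)]]) (use cc that in auto)
    have invJ: "(tau n a b x, tau n a b y) \<in> blockrel J"
      if "a \<in> {1..n}" "b \<in> {1..n}" "(x,y) \<in> blockrel J" for a b x y
      unfolding tau_def by (rule comm_inv[OF p(3) invol_sw[OF that(1,2)]]) (use cc that in auto)
    have Iid: "I = id_part n" by (rule I_id[OF assms p(1) invI])
    have "J = id_part n \<or> J = {{1..2*n}}"
      by (rule J_cases[OF assms p(3) _ invJ]) (use p(4) Iid in auto)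
    then show ?thesis using IJ Iid ep unfolding rone_def by auto
  qed
  show ?thesis
  proof (intro equalityI subsetI)
    fix z assume "z \<in> center n (ramified n (symgrp n))"
    then have "z = rone n \<or> z = eprod n" by (rule sub)
    then show "z \<in> {rone n, eprod n}" by simp
  next
    fix z assume "z \<in> {rone n, eprod n}"
    then have "z = rone n \<or> z = (id_part n, {{1..2*n}})" using ep by simp
    then show "z \<in> center n (ramified n (symgrp n))" using rone_c full_c by auto
  qed
qed

end
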